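(* (i) Let $n\in\{3,4\}$ and let $P\in\mathbb{C}[z]$ be a polynomial of degree $n$ whose set of critical values is exactly $\{0,1\}$. Then $P$ is extendedly equivalent either to the Chebycheff polynomial $\frac12(1+T_n(z))$ or to a Belyi polynomial $P_{m,r}$ with $m,r\ge1$, $m+r=n$. (iii) There exists a polynomial $P\in\mathbb{C}[z]$ of degree $6$ whose set of critical values is exactly $\{0,1\}$ such that $P$ is not extendedly equivalent to its complex conjugate $\bar P$; in particular $P$ is not extendedly equivalent to any polynomial in $\mathbb{R}[z]$.
   Context: Two polynomials $P,Q\in\mathbb{C}[z]$ are right affine equivalent if $Q(z)=P(az+b)$ for some $a\in\mathbb{C}^*$, $b\in\mathbb{C}$. For $P$ with set of critical values $\{0,1\}$, the polynomial $1-P$ also has critical values $\{0,1\}$; $P$ and $Q$ are called extendedly equivalent if $Q$ is right affine equivalent to $P$ or to $1-P$. $T_n$ denotes the Chebycheff polynomial, $T_n(\cos\theta)=\cos(n\theta)$. For positive integers $m,r$ the Belyi polynomial is $P_{m,r}(z)=z^m(1-z)^r(m+r)^{m+r}m^{-m}r^{-r}$. For $P(z)=\sum a_iz^i$, $\bar P(z)=\sum \bar a_i z^i$ (coefficientwise complex conjugation). Critical values are the values of $P$ at roots of $P'$. *)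

theory Defs
  imports "HOL-Computational_Algebra.Polynomial"
begin

definition crit_values :: "complex poly \<Rightarrow> complex set" where
  "crit_values P = {poly P c | c. poly (pderiv P) c = 0}"

definition right_aff_equiv :: "complex poly \<Rightarrow> complex poly \<Rightarrow> bool" where
  "right_aff_equiv P Q \<longleftrightarrow> (\<exists>a b. a \<noteq> 0 \<and> Q = pcompose P [:b, a:])"

definition ext_equiv :: "complex poly \<Rightarrow> complex poly \<Rightarrow> bool" where
  "ext_equiv P Q \<longleftrightarrow> right_aff_equiv P Q \<or> right_aff_equiv (1 - P) Q"

fun cheb :: "nat \<Rightarrow> complex poly" where
  "cheb 0 = 1"
| "cheb (Suc 0) = [:0, 1:]"
| "cheb (Suc (Suc n)) = [:0, 2:] * cheb (Suc n) - cheb n"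

definition belyi :: "nat \<Rightarrow> nat \<Rightarrow> complex poly" where
  "belyi m r = smult (of_nat ((m + r) ^ (m + r)) / (of_nat (m ^ m) * of_nat (r ^ r)))
                 ([:0, 1:] ^ m * [:1, -1:] ^ r)"

definition conj_poly :: "complex poly \<Rightarrow> complex poly" where
  "conj_poly P = map_poly cnj P"

end

theory Submission
  imports Defs
begin

lemma poly_lin: "poly (pcompose p [:b,a:]) x = poly p (b + a*x)"
  by (simp add: poly_pcompose mult.commute)

lemma pderiv_lin: "pderiv (pcompose p [:b,a:]) = smult a (pcompose (pderiv p) [:b,a:])"
  by (simp add: pderiv_pcompose pderiv_pCons)

lemma dpoly_lin: "poly (pderiv (pcompose p [:b,a:])) x = a * poly (pderiv p) (b + a*x)"
  by (simp add: pderiv_lin poly_pcompose mult.commute)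

lemma ddpoly_lin: "poly (pderiv (pderiv (pcompose p [:b,a:]))) x = a^2 * poly (pderiv (pderiv p)) (b + a*x)"
  by (simp add: pderiv_lin pderiv_smult poly_pcompose power2_eq_square mult.commute)

lemma crit_aff:
  assumes "a \<noteq> 0"
  shows "crit_values (pcompose p [:b,a:]) = crit_values p"
proof
  show "crit_values (pcompose p [:b,a:]) \<subseteq> crit_values p"
    unfolding crit_values_def using assms by (auto simp: dpoly_lin poly_lin)
  show "crit_values p \<subseteq> crit_values (pcompose p [:b,a:])"
  proof
    fix v assume "v \<in> crit_values p"
    then obtain c where c: "v = poly p c" "poly (pderiv p) c = 0" unfolding crit_values_def by auto
    have e: "b + a * ((c - b)/a) = c" using assms by (simp add: field_simps)
    show "v \<in> crit_values (pcompose p [:b,a:])"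
      unfolding crit_values_def
      by (rule CollectI, rule exI[of _ "(c-b)/a"]) (simp add: dpoly_lin poly_lin e c assms)
  qed
qed

lemma pderiv_1m: "pderiv (1 - p) = - pderiv (p::complex poly)"
  by (simp add: pderiv_diff)

lemma crit_1m: "crit_values (1 - p) = (\<lambda>x. 1 - x) ` crit_values (p::complex poly)"
  unfolding crit_values_def by (auto simp: pderiv_1m)

lemma crit_1m01: "crit_values p = {0,1} \<Longrightarrow> crit_values (1 - p) = {0,1::complex}"
  by (simp add: crit_1m insert_commute)

lemma deg_1m: "degree p \<ge> 1 \<Longrightarrow> degree (1 - p) = degree (p::complex poly)"
proof -
  assume "degree p \<ge> 1"
  have "1 - p = - (p - 1)" by simp
  moreover have "degree (p + (- 1)) = degree p"
    using \<open>degree p \<ge> 1\<close> by (intro degree_add_eq_left) simp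
  ultimately show ?thesis using degree_minus[of "p - 1"] by simp
qed

lemma comp_lin: "pcompose [:b,a:] [:d,c:] = [:b + a*d, (a::complex)*c:]"
  by (simp add: pcompose_pCons algebra_simps)

lemma raff_trans:
  assumes "right_aff_equiv P Q" "right_aff_equiv Q R"
  shows "right_aff_equiv P R"
proof -
  obtain a b where ab: "a \<noteq> 0" "Q = pcompose P [:b,a:]" using assms(1) unfolding right_aff_equiv_def by auto
  obtain c d where cd: "c \<noteq> 0" "R = pcompose Q [:d,c:]" using assms(2) unfolding right_aff_equiv_def by auto
  have "R = pcompose P [:b + a*d, a*c:]"
    by (simp add: ab cd pcompose_assoc[symmetric] comp_lin)
  thus ?thesis unfolding right_aff_equiv_def using ab cd by (intro exI[of _ "a*c"] exI[of _ "b + a*d"]) auto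
qed

lemma explicit4:
  assumes "degree (p::complex poly) \<le> 4"
  shows "p = [:coeff p 0, coeff p 1, coeff p 2, coeff p 3, coeff p 4:]"
proof (rule poly_eqI)
  fix n
  show "coeff p n = coeff [:coeff p 0, coeff p 1, coeff p 2, coeff p 3, coeff p 4:] n"
  proof (cases "n \<le> 4")
    case True
    then have "n = 0 \<or> n = 1 \<or> n = 2 \<or> n = 3 \<or> n = 4" by auto
    then show ?thesis by (elim disjE) (simp_all add: eval_nat_numeral)
  next
    case False
    then show ?thesis using assms by (auto simp: coeff_eq_0 coeff_pCons split: nat.split)
  qed
qed

lemma norm_lemma:
  assumes "degree P = n" "poly P c = 0" "poly (pderiv P) c = 0"
  defines "Q \<equiv> pcompose P [:c,1:]"
  shows "degree Q = n" "coeff Q 0 = 0" "coeff Q 1 = 0" "crit_values Q = crit_values P"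
    "\<And>x. poly Q x = poly P (c + x)" "\<And>x. poly (pderiv Q) x = poly (pderiv P) (c + x)"
    "\<And>x. poly (pderiv (pderiv Q)) x = poly (pderiv (pderiv P)) (c + x)"
    "\<And>B. right_aff_equiv Q B \<Longrightarrow> right_aff_equiv P B"
proof -
  show "degree Q = n" unfolding Q_def using assms(1) by (simp add: degree_pcompose)
  show px: "\<And>x. poly Q x = poly P (c + x)" unfolding Q_def by (simp add: poly_lin)
  show dx: "\<And>x. poly (pderiv Q) x = poly (pderiv P) (c + x)" unfolding Q_def by (simp add: dpoly_lin)
  show "\<And>x. poly (pderiv (pderiv Q)) x = poly (pderiv (pderiv P)) (c + x)" unfolding Q_def by (simp add: ddpoly_lin)
  show "coeff Q 0 = 0" using px[of 0] assms(2) by (simp add: poly_0_coeff_0)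
  show "coeff Q 1 = 0" using dx[of 0] assms(3) by (simp add: poly_0_coeff_0 coeff_pderiv)
  show "crit_values Q = crit_values P" unfolding Q_def by (rule crit_aff) simp
  show "\<And>B. right_aff_equiv Q B \<Longrightarrow> right_aff_equiv P B"
  proof -
    fix B assume "right_aff_equiv Q B"
    moreover have "right_aff_equiv P Q" unfolding right_aff_equiv_def Q_def by (intro exI[of _ 1] exI[of _ c]) auto
    ultimately show "right_aff_equiv P B" using raff_trans by blast
  qed
qed



lemma ev3: "poly [:0,0,q2,q3:] x = q2*x^2 + q3*x^3"
  "poly (pderiv [:0,0,q2,q3:]) x = 2*q2*x + 3*q3*x^2"
  for x q2 q3 :: complex
  by (simp_all add: pderiv_pCons algebra_simps eval_nat_numeral)

lemma ev4: "poly [:0,0,q2,q3,q4:] x = q2*x^2 + q3*x^3 + q4*x^4"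
  "poly (pderiv [:0,0,q2,q3,q4:]) x = 2*q2*x + 3*q3*x^2 + 4*q4*x^3"
  "poly (pderiv (pderiv [:0,0,q2,q3,q4:])) x = 2*q2 + 6*q3*x + 12*q4*x^2"
  for x q2 q3 q4 :: complex
  by (simp_all add: pderiv_pCons algebra_simps eval_nat_numeral)

lemma belyi21: "poly (belyi 2 1) z = 27/4 * z^2 - 27/4*z^3"
  by (simp add: belyi_def algebra_simps eval_nat_numeral)
lemma belyi31: "poly (belyi 3 1) z = 256/27 * z^3 - 256/27*z^4"
  by (simp add: belyi_def algebra_simps eval_nat_numeral)
lemma belyi22: "poly (belyi 2 2) z = 16 * z^2 - 32*z^3 + 16*z^4"
  by (simp add: belyi_def algebra_simps eval_nat_numeral)



lemma raff_poly: "d \<noteq> 0 \<Longrightarrow> (\<And>z. poly B z = poly Q (d*z)) \<Longrightarrow> right_aff_equiv Q B"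
proof -
  assume d: "d \<noteq> 0" and e: "\<And>z. poly B z = poly Q (d*z)"
  have "B = pcompose Q [:0,d:]"
    by (simp add: poly_eq_poly_eq_iff[symmetric] poly_lin fun_eq_iff e)
  then show ?thesis unfolding right_aff_equiv_def using d by blast
qed

lemma C3:
  fixes q2 q3 :: complex
  assumes c: "poly (pderiv [:0,0,q2,q3:]) c = 0" "poly [:0,0,q2,q3:] c = 1"
  shows "right_aff_equiv [:0,0,q2,q3:] (belyi 2 1)"
proof -
  have h1: "2*q2*c + 3*q3*c^2 = 0" and h2: "q2*c^2 + q3*c^3 = 1" using c unfolding ev3 by simp_all
  have "c \<noteq> 0" using h2 by auto
  then have q2: "q2 = -3*q3*c/2" using h1 by (simp add: power2_eq_square) algebra
  have k: "q3*c^3 = -2" using h2 unfolding q2 by (simp add: power2_eq_square power3_eq_cube) algebra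
  have "c \<noteq> 0" using k by auto
  show ?thesis
  proof (rule raff_poly[of "3*c/2"])
    show "3*c/2 \<noteq> 0" using \<open>c \<noteq> 0\<close> by simp
    fix z
    have hq: "poly [:0,0,q2,q3:] (3*c/2*z) = 27/8*(q3*c^3)*(z^3 - z^2)"
      unfolding ev3 q2 by (simp add: power2_eq_square power3_eq_cube) algebra
    show "poly (belyi 2 1) z = poly [:0,0,q2,q3:] (3*c/2*z)"
      unfolding belyi21 hq k by (simp add: field_simps)
  qed
qed



lemma C4:
  fixes q2 q3 q4 :: complex
  defines "Q \<equiv> [:0,0,q2,q3,q4:]"
  assumes q4: "q4 \<noteq> 0"
  and c: "poly (pderiv Q) c = 0" "poly Q c = 1"
  and H: "\<And>x. poly (pderiv Q) x = 0 \<Longrightarrow> poly Q x = 0 \<or> poly Q x = 1"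
  shows "right_aff_equiv Q (belyi 3 1) \<or> right_aff_equiv Q (belyi 2 2) \<or>
         (q2 \<noteq> 0 \<and> (\<forall>w. poly (pderiv Q) w = 0 \<and> w \<noteq> 0 \<longrightarrow> poly Q w = 1))"
proof -
  have h1: "2*q2*c + 3*q3*c^2 + 4*q4*c^3 = 0" and h2: "q2*c^2 + q3*c^3 + q4*c^4 = 1"
    using c unfolding Q_def ev4 by simp_all
  have "c \<noteq> 0" using h2 by auto
  have S: "2*q2 + 3*q3*c + 4*q4*c^2 = 0"
  proof -
    have "c * (2*q2 + 3*q3*c + 4*q4*c^2) = 0" using h1 by (simp add: power2_eq_square power3_eq_cube) algebra
    then show ?thesis using \<open>c \<noteq> 0\<close> by simp
  qed
  show ?thesis
  proof (cases "q2 = 0")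
    case True
    have q3: "q3 = -4*q4*c/3" using S True \<open>c \<noteq> 0\<close> by (simp add: power2_eq_square) algebra
    have k: "q4*c^4 = -3" using h2 True unfolding q3 by (simp add: power2_eq_square power3_eq_cube) algebra
    have "right_aff_equiv Q (belyi 3 1)"
    proof (rule raff_poly[of "4*c/3"])
      show "4*c/3 \<noteq> 0" using \<open>c \<noteq> 0\<close> by simp
      fix z
      have hq: "poly Q (4*c/3*z) = 256/81*(q4*c^4)*(z^4 - z^3)"
        unfolding Q_def ev4 q3 True by (simp add: power2_eq_square power3_eq_cube) algebra
      show "poly (belyi 3 1) z = poly Q (4*c/3*z)"
        unfolding belyi31 hq k by (simp add: field_simps)
    qed
    then show ?thesis by simp
  next
    case False
    show ?thesis
    proof (cases "q3^2 - 4*q2*q4 = 0")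
      case True
      define d where "d = -q3/(2*q4)"
      have q3: "q3 = -2*q4*d" unfolding d_def using q4 by simp
      have q2: "q2 = q4*d^2" using True q4 unfolding q3 by (auto simp: power2_eq_square algebra_simps)
      have "d \<noteq> 0" using False q2 by auto
      have "2*q4*(d - c)*(d - 2*c) = 0" using S unfolding q2 q3 by (simp add: power2_eq_square) algebra
      then have "d = c \<or> d = 2*c" using q4 by auto
      moreover have "d \<noteq> c"
      proof
        assume dc: "d = c"
        have "q2*c^2 + q3*c^3 + q4*c^4 = 0" unfolding q2 q3 dc by (simp add: power2_eq_square) algebra
        then show False using h2 by simp
      qed
      ultimately have dc: "d = 2*c" by simp
      have k: "q4*c^4 = 1" using h2 unfolding q2 q3 dc by (simp add: power2_eq_square) algebra
      have "right_aff_equiv Q (belyi 2 2)"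
      proof (rule raff_poly[of "d"])
        show "d \<noteq> 0" by fact
        fix z
        have hq: "poly Q (d*z) = 16*(q4*c^4)*(z^2 - 2*z^3 + z^4)"
          unfolding Q_def ev4 q2 q3 dc by (simp add: power2_eq_square power3_eq_cube) algebra
        show "poly (belyi 2 2) z = poly Q (d*z)"
          unfolding belyi22 hq k by (simp add: field_simps)
      qed
      then show ?thesis by simp
    next
      case disc: False
      have "\<forall>w. poly (pderiv Q) w = 0 \<and> w \<noteq> 0 \<longrightarrow> poly Q w = 1"
      proof (intro allI impI)
        fix w assume w: "poly (pderiv Q) w = 0 \<and> w \<noteq> 0"
        show "poly Q w = 1"
        proof (rule ccontr)
          assume "poly Q w \<noteq> 1"
          then have z: "poly Q w = 0" using H w by blast
          have R: "q2 + q3*w + q4*w^2 = 0"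
          proof -
            have "w^2 * (q2 + q3*w + q4*w^2) = 0" using z unfolding Q_def ev4
              by (simp add: power2_eq_square power3_eq_cube) algebra
            then show ?thesis using w by simp
          qed
          have S': "2*q2 + 3*q3*w + 4*q4*w^2 = 0"
          proof -
            have "w * (2*q2 + 3*q3*w + 4*q4*w^2) = 0" using w unfolding Q_def ev4
              by (simp add: power2_eq_square power3_eq_cube) algebra
            then show ?thesis using w by simp
          qed
          have "w * (q3 + 2*q4*w) = 0" using R S' by (simp add: power2_eq_square) algebra
          then have q3: "q3 = -2*q4*w" using w by (simp add: algebra_simps) algebra
          have q2: "q2 = q4*w^2" using R unfolding q3 by (simp add: power2_eq_square)
          have "q3^2 - 4*q2*q4 = 0" unfolding q2 q3 by (simp add: power2_eq_square)
          then show False using disc by simp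
        qed
      qed
      then show ?thesis using False by simp
    qed
  qed
qed

lemma CT:
  fixes q2 q3 q4 :: complex
  defines "Q \<equiv> [:0,0,q2,q3,q4:]"
  assumes q4: "q4 \<noteq> 0" and q2: "q2 \<noteq> 0" and w: "w \<noteq> 0" "poly (pderiv Q) w = 0"
    "poly (pderiv (pderiv Q)) w \<noteq> 0"
  and H: "\<And>x. poly (pderiv Q) x = 0 \<Longrightarrow> x = 0 \<or> x = w"
  shows False
proof -
  have S: "2*q2 + 3*q3*w + 4*q4*w^2 = 0"
  proof -
    have "w * (2*q2 + 3*q3*w + 4*q4*w^2) = 0" using w unfolding Q_def ev4
      by (simp add: power2_eq_square power3_eq_cube) algebra
    then show ?thesis using w by simp
  qed
  define v where "v = -3*q3/(4*q4) - w"
  have q3: "q3 = -4*q4*(v + w)/3" unfolding v_def using q4 by (simp add: field_simps)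
  have Sv: "2*q2 + 3*q3*v + 4*q4*v^2 = 0"
    using S unfolding q3 by (simp add: power2_eq_square) algebra
  have "poly (pderiv Q) v = 0" unfolding Q_def ev4
  proof -
    have "2*q2*v + 3*q3*v^2 + 4*q4*v^3 = v * (2*q2 + 3*q3*v + 4*q4*v^2)"
      by (simp add: power2_eq_square power3_eq_cube algebra_simps)
    then show "2*q2*v + 3*q3*v^2 + 4*q4*v^3 = 0" using Sv by simp
  qed
  then have "v = 0 \<or> v = w" using H by blast
  then show False
  proof
    assume "v = 0" then show False using Sv q2 by simp
  next
    assume vw: "v = w"
    have q3': "q3 = -8*q4*w/3" unfolding q3 vw by simp
    have q2': "q2 = 2*q4*w^2" using S unfolding q3' by (simp add: power2_eq_square)
    have "poly (pderiv (pderiv Q)) w = 0" unfolding Q_def ev4 q2' q3'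
      by (simp add: power2_eq_square)
    then show False using w by simp
  qed
qed



lemma crit_get:
  assumes "crit_values P = {0,1}"
  obtains c where "poly (pderiv P) c = 0" "poly P c = 1"
proof -
  have "1 \<in> crit_values P" using assms by simp
  then show ?thesis using that unfolding crit_values_def by auto
qed

lemma crit_get0:
  assumes "crit_values P = {0,1}"
  obtains c where "poly (pderiv P) c = 0" "poly P c = 0"
proof -
  have "0 \<in> crit_values P" using assms by simp
  then show ?thesis using that unfolding crit_values_def by auto
qed

lemma crit_H:
  assumes "crit_values P = {0,1}" "poly (pderiv P) x = 0"
  shows "poly P x = 0 \<or> poly P x = 1"
proof -
  have "poly P x \<in> crit_values P" unfolding crit_values_def using assms(2) by auto
  then show ?thesis using assms(1) by auto
qed

lemma part3:
  assumes "degree P = 3" "crit_values P = {0,1}"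
  shows "right_aff_equiv P (belyi 2 1)"
proof -
  obtain c0 where c0: "poly (pderiv P) c0 = 0" "poly P c0 = 0" using crit_get0[OF assms(2)] .
  define Q where "Q = pcompose P [:c0,1:]"
  note N = norm_lemma[OF assms(1) c0(2) c0(1), folded Q_def]
  have "Q = [:coeff Q 0, coeff Q 1, coeff Q 2, coeff Q 3, coeff Q 4:]"
    using N(1) by (intro explicit4) simp
  also have "\<dots> = [:0,0,coeff Q 2, coeff Q 3:]" using N(1,2,3) by (simp add: coeff_eq_0)
  finally have QE: "Q = [:0,0,coeff Q 2, coeff Q 3:]" .
  obtain c where c: "poly (pderiv Q) c = 0" "poly Q c = 1" using crit_get N(4) assms(2) by metis
  have "right_aff_equiv Q (belyi 2 1)" using C3[of "coeff Q 2" "coeff Q 3" c] c QE by simp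
  then show ?thesis using N(8) by blast
qed

lemma part4:
  assumes "degree P = 4" "crit_values P = {0,1}"
  shows "right_aff_equiv P (belyi 3 1) \<or> right_aff_equiv P (belyi 2 2) \<or>
         (\<exists>c0. poly P c0 = 0 \<and> poly (pderiv P) c0 = 0 \<and> poly (pderiv (pderiv P)) c0 \<noteq> 0 \<and>
            (\<forall>w. poly (pderiv P) w = 0 \<and> w \<noteq> c0 \<longrightarrow> poly P w = 1))"
proof -
  obtain c0 where c0: "poly (pderiv P) c0 = 0" "poly P c0 = 0" using crit_get0[OF assms(2)] .
  define Q where "Q = pcompose P [:c0,1:]"
  note N = norm_lemma[OF assms(1) c0(2) c0(1), folded Q_def]
  have "Q = [:coeff Q 0, coeff Q 1, coeff Q 2, coeff Q 3, coeff Q 4:]"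
    using N(1) by (intro explicit4) simp
  also have "\<dots> = [:0,0,coeff Q 2, coeff Q 3, coeff Q 4:]" using N(1,2,3) by simp
  finally have QE: "Q = [:0,0,coeff Q 2, coeff Q 3, coeff Q 4:]" .
  have "Q \<noteq> 0" using N(1) by auto
  then have "lead_coeff Q \<noteq> 0" by simp
  then have q4: "coeff Q 4 \<noteq> 0" using N(1) by simp
  have crQ: "crit_values Q = {0,1}" using N(4) assms(2) by simp
  obtain c where c: "poly (pderiv Q) c = 0" "poly Q c = 1" using crit_get crQ by metis
  have H: "\<And>x. poly (pderiv Q) x = 0 \<Longrightarrow> poly Q x = 0 \<or> poly Q x = 1" using crit_H crQ by blast
  have "right_aff_equiv Q (belyi 3 1) \<or> right_aff_equiv Q (belyi 2 2) \<or>
         (coeff Q 2 \<noteq> 0 \<and> (\<forall>w. poly (pderiv Q) w = 0 \<and> w \<noteq> 0 \<longrightarrow> poly Q w = 1))"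
    using C4[where ?q2.0="coeff Q 2" and ?q3.0="coeff Q 3" and ?q4.0="coeff Q 4" and c=c, folded QE] q4 c H by blast
  then show ?thesis
  proof (elim disjE)
    assume "right_aff_equiv Q (belyi 3 1)" then show ?thesis using N(8) by blast
  next
    assume "right_aff_equiv Q (belyi 2 2)" then show ?thesis using N(8) by blast
  next
    assume a: "coeff Q 2 \<noteq> 0 \<and> (\<forall>w. poly (pderiv Q) w = 0 \<and> w \<noteq> 0 \<longrightarrow> poly Q w = 1)"
    have "poly (pderiv (pderiv Q)) 0 = 2 * coeff Q 2" by (subst QE) (simp add: ev4)
    then have "poly (pderiv (pderiv P)) c0 \<noteq> 0" using a N(7)[of 0] by simp
    moreover have "\<forall>w. poly (pderiv P) w = 0 \<and> w \<noteq> c0 \<longrightarrow> poly P w = 1"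
    proof (intro allI impI)
      fix w assume w: "poly (pderiv P) w = 0 \<and> w \<noteq> c0"
      have "poly (pderiv Q) (w - c0) = 0" "w - c0 \<noteq> 0" using w N(6)[of "w - c0"] by auto
      then have "poly Q (w - c0) = 1" using a by blast
      then show "poly P w = 1" using N(5)[of "w - c0"] by simp
    qed
    ultimately show ?thesis using c0 by blast
  qed
qed


lemma CTP:
  fixes P :: "complex poly"
  assumes "degree P = 4" "poly P c0 = 0" "poly (pderiv P) c0 = 0" "poly (pderiv (pderiv P)) c0 \<noteq> 0"
    "c1 \<noteq> c0" "poly (pderiv P) c1 = 0" "poly (pderiv (pderiv P)) c1 \<noteq> 0"
    "\<And>x. poly (pderiv P) x = 0 \<Longrightarrow> x = c0 \<or> x = c1"
  shows False
proof -
  define Q where "Q = pcompose P [:c0,1:]"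
  note N = norm_lemma[OF assms(1) assms(2) assms(3), folded Q_def]
  have "Q = [:coeff Q 0, coeff Q 1, coeff Q 2, coeff Q 3, coeff Q 4:]"
    using N(1) by (intro explicit4) simp
  also have "\<dots> = [:0,0,coeff Q 2, coeff Q 3, coeff Q 4:]" using N(1,2,3) by simp
  finally have QE: "Q = [:0,0,coeff Q 2, coeff Q 3, coeff Q 4:]" .
  have "Q \<noteq> 0" using N(1) by auto
  then have "lead_coeff Q \<noteq> 0" by simp
  then have q4: "coeff Q 4 \<noteq> 0" using N(1) by simp
  have "poly (pderiv (pderiv Q)) 0 = 2 * coeff Q 2" by (subst QE) (simp add: ev4)
  then have q2: "coeff Q 2 \<noteq> 0" using assms(4) N(7)[of 0] by simp
  show False
  proof (rule CT[where ?q2.0="coeff Q 2" and ?q3.0="coeff Q 3" and ?q4.0="coeff Q 4" and w="c1 - c0", folded QE])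
    show "coeff Q 4 \<noteq> 0" "coeff Q 2 \<noteq> 0" by fact+
    show "c1 - c0 \<noteq> 0" using assms(5) by simp
    show "poly (pderiv Q) (c1 - c0) = 0" using N(6) assms(6) by simp
    show "poly (pderiv (pderiv Q)) (c1 - c0) \<noteq> 0" using N(7) assms(7) by simp
    fix x assume "poly (pderiv Q) x = 0"
    then have "poly (pderiv P) (c0 + x) = 0" using N(6) by simp
    then have "c0 + x = c0 \<or> c0 + x = c1" using assms(8) by blast
    then show "x = 0 \<or> x = c1 - c0" by auto
  qed
qed

lemma poly_1m: "poly (1 - P) x = 1 - poly P x"
  "poly (pderiv (1 - P)) x = - poly (pderiv P) x"
  "poly (pderiv (pderiv (1 - P))) x = - poly (pderiv (pderiv P)) x" for P :: "complex poly"
  by (simp_all add: pderiv_1m pderiv_minus)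

lemma part_i4:
  assumes "degree P = 4" "crit_values P = {0,1}"
  shows "\<exists>m r. m \<ge> 1 \<and> r \<ge> 1 \<and> m + r = 4 \<and> ext_equiv P (belyi m r)"
proof -
  have d1: "degree (1 - P) = 4" using deg_1m[of P] assms(1) by simp
  have c1: "crit_values (1 - P) = {0,1}" using crit_1m01 assms(2) by blast
  note A = part4[OF assms]
  note B = part4[OF d1 c1]
  have e31: "ext_equiv P (belyi 3 1) \<Longrightarrow> ?thesis" by (intro exI[of _ 3] exI[of _ 1]) auto
  have e22: "ext_equiv P (belyi 2 2) \<Longrightarrow> ?thesis" by (intro exI[of _ 2] exI[of _ 2]) auto
  show ?thesis
  proof (cases "right_aff_equiv P (belyi 3 1) \<or> right_aff_equiv P (belyi 2 2) \<or>
      right_aff_equiv (1 - P) (belyi 3 1) \<or> right_aff_equiv (1 - P) (belyi 2 2)")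
    case True
    then show ?thesis using e31 e22 unfolding ext_equiv_def by blast
  next
    case False
    then obtain c0 where a: "poly P c0 = 0" "poly (pderiv P) c0 = 0" "poly (pderiv (pderiv P)) c0 \<noteq> 0"
      "\<forall>w. poly (pderiv P) w = 0 \<and> w \<noteq> c0 \<longrightarrow> poly P w = 1" using A by blast
    obtain c1 where b: "poly (1 - P) c1 = 0" "poly (pderiv (1 - P)) c1 = 0"
      "poly (pderiv (pderiv (1 - P))) c1 \<noteq> 0"
      "\<forall>w. poly (pderiv (1 - P)) w = 0 \<and> w \<noteq> c1 \<longrightarrow> poly (1 - P) w = 1" using B False by blast
    have b': "poly P c1 = 1" "poly (pderiv P) c1 = 0" "poly (pderiv (pderiv P)) c1 \<noteq> 0"
      "\<forall>w. poly (pderiv P) w = 0 \<and> w \<noteq> c1 \<longrightarrow> poly P w = 0" using b unfolding poly_1m by auto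
    have "c1 \<noteq> c0" using a(1) b'(1) by auto
    moreover have "\<And>x. poly (pderiv P) x = 0 \<Longrightarrow> x = c0 \<or> x = c1"
      using a(4) b'(4) by fastforce
    ultimately have False using CTP[OF assms(1) a(1-3) _ b'(2-3)] by blast
    then show ?thesis ..
  qed
qed

lemma part_i3:
  assumes "degree P = 3" "crit_values P = {0,1}"
  shows "\<exists>m r. m \<ge> 1 \<and> r \<ge> 1 \<and> m + r = 3 \<and> ext_equiv P (belyi m r)"
  using part3[OF assms] unfolding ext_equiv_def by (intro exI[of _ 2] exI[of _ 1]) auto



definition P6 :: "complex poly" where
 "P6 = [:0,0,0, 38 - 41*\<i>, -333/4 + 303/2*\<i>, 105/2 - 180*\<i>, -29/4 + 139/2*\<i>:]"

definition w6 :: complex where "w6 = 3/5 + 1/5*\<i>"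
definition K6 :: complex where "K6 = 6*(-29/4 + 139/2*\<i>)"

lemma K6_nz: "K6 \<noteq> 0"
  by (simp add: K6_def complex_eq_iff)

lemma w6_nz: "w6 \<noteq> 0" "w6 \<noteq> 1"
  by (simp_all add: w6_def complex_eq_iff)

lemma P6_d: "poly (pderiv P6) x = K6 * x^2 * (x-1) * (x - w6)^2"
  unfolding P6_def K6_def w6_def
  apply (simp add: pderiv_pCons)
  using complex_i_mult_minus[of x]
  by algebra

lemma P6_dd: "poly (pderiv (pderiv P6)) x = K6 * (2*x*(x-1)*(x-w6)^2 + x^2*(x-w6)^2 + 2*x^2*(x-1)*(x-w6))"
  unfolding P6_def K6_def w6_def
  apply (simp add: pderiv_pCons)
  using complex_i_mult_minus[of x]
  by algebra

lemma P6_w: "poly P6 w6 = 1"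
  unfolding P6_def w6_def
  apply (simp)
  using complex_i_mult_minus[of 1]
  by algebra

lemma P6_01: "poly P6 0 = 0" "poly P6 1 = 0"
  unfolding P6_def by simp_all

lemma P6_deg: "degree P6 = 6"
  unfolding P6_def by (simp add: complex_eq_iff)

lemma P6_crit_pts: "poly (pderiv P6) x = 0 \<Longrightarrow> x = 0 \<or> x = 1 \<or> x = w6"
  unfolding P6_d using K6_nz by auto

lemma P6_dd_vals: "poly (pderiv (pderiv P6)) 0 = 0" "poly (pderiv (pderiv P6)) w6 = 0"
   "poly (pderiv (pderiv P6)) 1 \<noteq> 0"
  unfolding P6_dd using K6_nz w6_nz by auto

lemma P6_d_vals: "poly (pderiv P6) 0 = 0" "poly (pderiv P6) 1 = 0" "poly (pderiv P6) w6 = 0"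
  unfolding P6_d by auto



lemma conj_poly_pCons: "conj_poly (pCons a p) = pCons (cnj a) (conj_poly p)"
  unfolding conj_poly_def by (rule map_poly_pCons) simp

lemma poly_conj: "poly (conj_poly p) x = cnj (poly p (cnj x))"
proof (induction p)
  case 0 then show ?case by (simp add: conj_poly_def)
next
  case (pCons a p) then show ?case by (simp add: conj_poly_pCons)
qed

lemma coeff_conj: "coeff (conj_poly p) n = cnj (coeff p n)"
  unfolding conj_poly_def by (rule coeff_map_poly) simp

lemma pderiv_conj: "pderiv (conj_poly p) = conj_poly (pderiv p)"
  by (rule poly_eqI) (simp add: coeff_pderiv coeff_conj)

lemma conjP6_vals:
  "poly (conj_poly P6) 0 = 0" "poly (pderiv (conj_poly P6)) 0 = 0" "poly (pderiv (pderiv (conj_poly P6))) 0 = 0"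
  "poly (conj_poly P6) 1 = 0" "poly (pderiv (conj_poly P6)) 1 = 0" "poly (pderiv (pderiv (conj_poly P6))) 1 \<noteq> 0"
  by (simp_all add: pderiv_conj poly_conj P6_01 P6_d_vals P6_dd_vals)

lemma conjP6_ne: "conj_poly P6 \<noteq> P6"
proof
  assume "conj_poly P6 = P6"
  then have "coeff (conj_poly P6) 6 = coeff P6 6" by simp
  then show False unfolding coeff_conj by (simp add: P6_def complex_eq_iff eval_nat_numeral)
qed

lemma NE1:
  assumes "a \<noteq> 0" shows "conj_poly P6 \<noteq> pcompose P6 [:b,a:]"
proof
  assume E: "conj_poly P6 = pcompose P6 [:b,a:]"
  have v: "poly (conj_poly P6) x = poly P6 (b + a*x)"
      "poly (pderiv (conj_poly P6)) x = a * poly (pderiv P6) (b + a*x)"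
      "poly (pderiv (pderiv (conj_poly P6))) x = a^2 * poly (pderiv (pderiv P6)) (b + a*x)" for x
    unfolding E by (simp_all only: poly_lin dpoly_lin ddpoly_lin)
  have b0: "poly P6 b = 0" "poly (pderiv P6) b = 0" "poly (pderiv (pderiv P6)) b = 0"
    using v[of 0] conjP6_vals assms by auto
  have "b = 0"
    using P6_crit_pts[OF b0(2)] b0 P6_w P6_dd_vals by auto
  have a1: "poly P6 a = 0" "poly (pderiv P6) a = 0" "poly (pderiv (pderiv P6)) a \<noteq> 0"
    using v[of 1] conjP6_vals assms \<open>b = 0\<close> by auto
  have "a = 1"
    using P6_crit_pts[OF a1(2)] a1 P6_w P6_dd_vals by auto
  then show False using E \<open>b = 0\<close> conjP6_ne by simp
qed

lemma NE2:
  assumes "a \<noteq> 0" shows "conj_poly P6 \<noteq> pcompose (1 - P6) [:b,a:]"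
proof
  assume E: "conj_poly P6 = pcompose (1 - P6) [:b,a:]"
  have v: "poly (conj_poly P6) x = 1 - poly P6 (b + a*x)"
      "poly (pderiv (conj_poly P6)) x = - a * poly (pderiv P6) (b + a*x)" for x
    unfolding E by (simp_all add: poly_lin dpoly_lin pderiv_1m)
  have b0: "poly P6 b = 1" "poly (pderiv P6) b = 0"
    using v[of 0] conjP6_vals assms by auto
  have "b = w6"
    using P6_crit_pts[OF b0(2)] b0 P6_01 by auto
  have a1: "poly P6 (b + a) = 1" "poly (pderiv P6) (b + a) = 0"
    using v[of 1] conjP6_vals assms by auto
  have "b + a = w6"
    using P6_crit_pts[OF a1(2)] a1 P6_01 by auto
  then show False using \<open>b = w6\<close> assms by simp
qed

lemma not_ext_conj: "\<not> ext_equiv P6 (conj_poly P6)"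
  unfolding ext_equiv_def right_aff_equiv_def using NE1 NE2 by metis

lemma real_conj: "(\<forall>i. coeff Q i \<in> \<real>) \<Longrightarrow> conj_poly Q = Q"
  by (rule poly_eqI) (simp add: coeff_conj Reals_cnj_iff)

lemma not_ext_real:
  assumes R: "\<forall>i. coeff Q i \<in> \<real>" shows "\<not> ext_equiv P6 Q"
proof
  assume "ext_equiv P6 Q"
  then obtain a b where ab: "a \<noteq> 0" "Q = pcompose P6 [:b,a:] \<or> Q = pcompose (1 - P6) [:b,a:]"
    unfolding ext_equiv_def right_aff_equiv_def by blast
  have QR: "poly Q (cnj x) = cnj (poly Q x)" for x
    using poly_conj[of Q x] real_conj[OF R] by simp
  have ca: "cnj a \<noteq> 0" using ab(1) by simp
  define a' where "a' = a / cnj a"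
  define b' where "b' = b - a * cnj b / cnj a"
  have arg: "b + a * cnj ((cnj y - b)/a) = b' + a' * y" for y
    unfolding a'_def b'_def using ca by (simp add: field_simps)
  have inv: "b + a * ((cnj y - b)/a) = cnj y" for y using ab(1) by (simp add: field_simps)
  have QP: "poly Q x = poly P6 (b + a*x) \<or> poly Q x = 1 - poly P6 (b + a*x)" for x
    using ab(2) by (auto simp: poly_lin)
  have key: "cnj (poly P6 (cnj y)) = poly P6 (b' + a' * y)" for y
  proof -
    define x where "x = (cnj y - b)/a"
    have x1: "b + a * x = cnj y" unfolding x_def by (rule inv)
    have x2: "b + a * cnj x = b' + a' * y" unfolding x_def by (rule arg)
    from ab(2) show ?thesis
    proof
      assume Qe: "Q = pcompose P6 [:b,a:]"
      have "cnj (poly P6 (cnj y)) = cnj (poly Q x)" unfolding Qe poly_lin x1 ..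
      also have "\<dots> = poly Q (cnj x)" by (simp add: QR)
      also have "\<dots> = poly P6 (b' + a' * y)" unfolding Qe poly_lin x2 ..
      finally show ?thesis .
    next
      assume Qe: "Q = pcompose (1 - P6) [:b,a:]"
      have "cnj (poly P6 (cnj y)) = 1 - cnj (poly Q x)" unfolding Qe poly_lin x1 by simp
      also have "\<dots> = 1 - poly Q (cnj x)" by (simp add: QR)
      also have "\<dots> = poly P6 (b' + a' * y)" unfolding Qe poly_lin x2 by simp
      finally show ?thesis .
    qed
  qed
  have "conj_poly P6 = pcompose P6 [:b', a':]"
    unfolding poly_eq_poly_eq_iff[symmetric]
    by (rule ext) (simp add: poly_conj key poly_lin)
  moreover have "a' \<noteq> 0" unfolding a'_def using ab(1) ca by simp
  ultimately show False using NE1 by blast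
qed



lemma P6_crit: "crit_values P6 = {0,1}"
proof
  show "crit_values P6 \<subseteq> {0,1}"
  proof
    fix v assume "v \<in> crit_values P6"
    then obtain x where x: "v = poly P6 x" "poly (pderiv P6) x = 0" unfolding crit_values_def by auto
    show "v \<in> {0,1}" using P6_crit_pts[OF x(2)] x(1) P6_01 P6_w by auto
  qed
  show "{0,1} \<subseteq> crit_values P6"
    unfolding crit_values_def using P6_01 P6_w P6_d_vals by force
qed

theorem mainTheorem3:
  shows "(\<forall>(n::nat) (P::complex poly). n \<in> {3, 4} \<and> degree P = n \<and> crit_values P = {0, 1} \<longrightarrow>
            ext_equiv P (smult (1/2) (1 + cheb n)) \<or>
            (\<exists>m r. m \<ge> 1 \<and> r \<ge> 1 \<and> m + r = n \<and> ext_equiv P (belyi m r)))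
       \<and> (\<exists>P::complex poly. degree P = 6 \<and> crit_values P = {0, 1} \<and>
            \<not> ext_equiv P (conj_poly P) \<and>
            (\<forall>Q::complex poly. (\<forall>i. coeff Q i \<in> \<real>) \<longrightarrow> \<not> ext_equiv P Q))"
proof (intro conjI allI impI)
  fix n :: nat and P :: "complex poly"
  assume a: "n \<in> {3, 4} \<and> degree P = n \<and> crit_values P = {0, 1}"
  then have "\<exists>m r. m \<ge> 1 \<and> r \<ge> 1 \<and> m + r = n \<and> ext_equiv P (belyi m r)"
    using part_i3[of P] part_i4[of P] by auto
  then show "ext_equiv P (smult (1/2) (1 + cheb n)) \<or>
            (\<exists>m r. m \<ge> 1 \<and> r \<ge> 1 \<and> m + r = n \<and> ext_equiv P (belyi m r))" by blast
next
  show "\<exists>P::complex poly. degree P = 6 \<and> crit_values P = {0, 1} \<and>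
            \<not> ext_equiv P (conj_poly P) \<and>
            (\<forall>Q::complex poly. (\<forall>i. coeff Q i \<in> \<real>) \<longrightarrow> \<not> ext_equiv P Q)"
    using P6_deg P6_crit not_ext_conj not_ext_real by blast
qed

end
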